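(* Let $x^*\in\Delta$ be a strict Nash equilibrium. Then $x^*$ is an attracting mutation limit point: $\{x^*\}$ is a mutation limit, and for every $c\in\operatorname{int}\Delta$ and every sequence of mutation equilibria $(x_n)$ for $c$ (with rates $M_n>0$, $M_n\to 0$) converging to $x^*$, there is $m>0$ such that $x_n$ is an asymptotically stable equilibrium of $\dot x=\phi^{M_n}(x)$ whenever $M_n<m$.
   Context: Let $I=\{1,\dots,N\}$ be a finite set of populations; population $i$ has the finite type set $S_i=\{1,\dots,n_i\}$. Let $S=\{(i,h): i\in I, h\in S_i\}$, $\Delta_i=\{x_i\in\mathbb R^{n_i}_{\ge 0}:\sum_{h\le n_i}x_{ih}=1\}$, $\Delta=\prod_{i\in I}\Delta_i\subset\mathbb R^S$, and $\operatorname{int}\Delta=\{x\in\Delta: x_{ih}>0 \text{ for all }(i,h)\in S\}$. For each $(i,h)\in S$ let $f_{ih}\in C^1(U,\mathbb R)$ for some open $U\supset\Delta$, with $\partial f_{ih}/\partial x_{ik}=0$ for all $i\in I$, $h,k\in S_i$. Put $\bar f_i(x)=\sum_{h\le n_i}x_{ih}f_{ih}(x)$, $g_{ih}=f_{ih}-\bar f_i$, and for $M\ge0$, $c\in\operatorname{int}\Delta$, $\phi^M_{ih}(x)=x_{ih}g_{ih}(x)+M(c_{ih}-x_{ih})$ (replicator–mutator dynamics; stability refers to its flow on $\Delta$). A strict Nash equilibrium is $x^*\in\Delta$ such that for all $i\in I$ and all $z_i\in\Delta_i\setminus\{x_i^*\}$, $\bar f_i(x^* )>\bar f_i(x^*_{-i},z_i)$,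 where $(x^*_{-i},z_i)$ is $x^*$ with its $i$-th component replaced by $z_i$. A mutation equilibrium for $M$ (w.r.t. $c$) is $x\in\Delta$ with $\phi^M(x)=0$; a sequence of mutation equilibria for $c$ is $(x_n)\subset\Delta$ with $M_n>0$, $M_n\to0$, $\phi^{M_n}(x_n)=0$. A mutation limit is a nonempty connected compact set $X\subset\Delta$ such that for every $c\in\operatorname{int}\Delta$ there is a sequence of mutation equilibria for $c$ converging to an element of $X$, and no proper subset of $X$ is a connected compact set with this property. A mutation limit $X$ is attracting if for every $c\in\operatorname{int}\Delta$ and every sequence of mutation equilibria for $c$ converging to an element of $X$, there is $m>0$ such that all terms with rate $M_n<m$ are asymptotically stable. *)

theory Defs
  imports "HOL-Analysis.Analysis"
begin

text \<open>Populations are the elements of the finite type 'i, the set S of all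
(population, type) pairs is the finite type 's, and pop s is the population
of s.  Points of R^S are vectors real^'s.\<close>

definition Delta :: "('s::finite \<Rightarrow> 'i::finite) \<Rightarrow> (real^'s) set" where
  "Delta pop = {x. (\<forall>s. 0 \<le> x$s) \<and> (\<forall>i. (\<Sum>s\<in>{s. pop s = i}. x$s) = 1)}"

definition int_Delta :: "('s::finite \<Rightarrow> 'i::finite) \<Rightarrow> (real^'s) set" where
  "int_Delta pop = {x \<in> Delta pop. \<forall>s. 0 < x$s}"

text \<open>Delta_i, represented by vectors whose population-i components form a point
of the simplex (other components irrelevant).\<close>
definition Delta_pop :: "('s::finite \<Rightarrow> 'i::finite) \<Rightarrow> 'i \<Rightarrow> (real^'s) set" where
  "Delta_pop pop i = {z. (\<forall>s. pop s = i \<longrightarrow> 0 \<le> z$s) \<and> (\<Sum>s\<in>{s. pop s = i}. z$s) = 1}"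

definition replace_pop :: "('s::finite \<Rightarrow> 'i) \<Rightarrow> 'i \<Rightarrow> real^'s \<Rightarrow> real^'s \<Rightarrow> real^'s" where
  "replace_pop pop i x z = (\<chi> s. if pop s = i then z$s else x$s)"

definition fbar :: "('s::finite \<Rightarrow> 'i) \<Rightarrow> ('s \<Rightarrow> real^'s \<Rightarrow> real) \<Rightarrow> 'i \<Rightarrow> real^'s \<Rightarrow> real" where
  "fbar pop f i x = (\<Sum>s\<in>{s. pop s = i}. x$s * f s x)"

definition gfit :: "('s::finite \<Rightarrow> 'i) \<Rightarrow> ('s \<Rightarrow> real^'s \<Rightarrow> real) \<Rightarrow> 's \<Rightarrow> real^'s \<Rightarrow> real" where
  "gfit pop f s x = f s x - fbar pop f (pop s) x"

definition phi :: "('s::finite \<Rightarrow> 'i) \<Rightarrow> ('s \<Rightarrow> real^'s \<Rightarrow> real) \<Rightarrow> real^'s \<Rightarrow> real \<Rightarrow> real^'s \<Rightarrow> real^'s" where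
  "phi pop f c M x = (\<chi> s. x$s * gfit pop f s x + M * (c$s - x$s))"

definition strict_nash :: "('s::finite \<Rightarrow> 'i::finite) \<Rightarrow> ('s \<Rightarrow> real^'s \<Rightarrow> real) \<Rightarrow> real^'s \<Rightarrow> bool" where
  "strict_nash pop f x \<longleftrightarrow> x \<in> Delta pop \<and>
     (\<forall>i. \<forall>z \<in> Delta_pop pop i. (\<exists>s. pop s = i \<and> z$s \<noteq> x$s) \<longrightarrow>
        fbar pop f i x > fbar pop f i (replace_pop pop i x z))"

definition C1_on :: "(real^'s::finite) set \<Rightarrow> (real^'s \<Rightarrow> real) \<Rightarrow> (real^'s \<Rightarrow> ((real^'s) \<Rightarrow>\<^sub>L real)) \<Rightarrow> bool" where
  "C1_on U g g' \<longleftrightarrow> (\<forall>x\<in>U. (g has_derivative blinfun_apply (g' x)) (at x)) \<and> continuous_on U g'"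

definition mut_eq_seq :: "('s::finite \<Rightarrow> 'i::finite) \<Rightarrow> ('s \<Rightarrow> real^'s \<Rightarrow> real) \<Rightarrow> real^'s
    \<Rightarrow> (nat \<Rightarrow> real^'s) \<Rightarrow> (nat \<Rightarrow> real) \<Rightarrow> bool" where
  "mut_eq_seq pop f c xs Ms \<longleftrightarrow>
     (\<forall>n. 0 < Ms n \<and> xs n \<in> Delta pop \<and> phi pop f c (Ms n) (xs n) = 0) \<and> Ms \<longlonglongrightarrow> 0"

definition reached_by_mut_eq :: "('s::finite \<Rightarrow> 'i::finite) \<Rightarrow> ('s \<Rightarrow> real^'s \<Rightarrow> real) \<Rightarrow> (real^'s) set \<Rightarrow> bool" where
  "reached_by_mut_eq pop f X \<longleftrightarrow>
     (\<forall>c \<in> int_Delta pop. \<exists>xs Ms. mut_eq_seq pop f c xs Ms \<and> (\<exists>x\<in>X. xs \<longlonglongrightarrow> x))"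

definition mutation_limit :: "('s::finite \<Rightarrow> 'i::finite) \<Rightarrow> ('s \<Rightarrow> real^'s \<Rightarrow> real) \<Rightarrow> (real^'s) set \<Rightarrow> bool" where
  "mutation_limit pop f X \<longleftrightarrow>
     X \<noteq> {} \<and> connected X \<and> compact X \<and> X \<subseteq> Delta pop \<and> reached_by_mut_eq pop f X \<and>
     (\<forall>Y. Y \<subset> X \<and> connected Y \<and> compact Y \<longrightarrow> \<not> reached_by_mut_eq pop f Y)"

definition is_solution_in :: "(real^'s::finite \<Rightarrow> real^'s) \<Rightarrow> (real^'s) set \<Rightarrow> (real \<Rightarrow> real^'s) \<Rightarrow> bool" where
  "is_solution_in F D y \<longleftrightarrow>
     (\<forall>t\<ge>0. y t \<in> D \<and> (y has_vector_derivative F (y t)) (at t within {0..}))"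

definition asymp_stable :: "(real^'s::finite \<Rightarrow> real^'s) \<Rightarrow> (real^'s) set \<Rightarrow> real^'s \<Rightarrow> bool" where
  "asymp_stable F D x0 \<longleftrightarrow> x0 \<in> D \<and> F x0 = 0 \<and>
     (\<forall>\<epsilon>>0. \<exists>\<delta>>0. \<forall>y. is_solution_in F D y \<and> dist (y 0) x0 < \<delta> \<longrightarrow> (\<forall>t\<ge>0. dist (y t) x0 < \<epsilon>)) \<and>
     (\<exists>\<eta>>0. \<forall>y. is_solution_in F D y \<and> dist (y 0) x0 < \<eta> \<longrightarrow> (y \<longlongrightarrow> x0) at_top)"

definition attracting_mutation_limit :: "('s::finite \<Rightarrow> 'i::finite) \<Rightarrow> ('s \<Rightarrow> real^'s \<Rightarrow> real) \<Rightarrow> (real^'s) set \<Rightarrow> bool" where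
  "attracting_mutation_limit pop f X \<longleftrightarrow> mutation_limit pop f X \<and>
     (\<forall>c \<in> int_Delta pop. \<forall>xs Ms. mut_eq_seq pop f c xs Ms \<and> (\<exists>x\<in>X. xs \<longlonglongrightarrow> x) \<longrightarrow>
        (\<exists>m>0. \<forall>n. Ms n < m \<longrightarrow> asymp_stable (phi pop f c (Ms n)) (Delta pop) (xs n)))"

end

theory Submission
  imports Defs
begin

context fixes pop :: "'s::finite \<Rightarrow> 'i::finite" begin

lemma Delta_nonneg: "x \<in> Delta pop \<Longrightarrow> 0 \<le> x$s"
  by (simp add: Delta_def)
lemma Delta_sum: "x \<in> Delta pop \<Longrightarrow> (\<Sum>s\<in>{s. pop s = i}. x$s) = 1"
  by (simp add: Delta_def)
lemma Delta_le1: "x \<in> Delta pop \<Longrightarrow> x$s \<le> 1"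
proof -
  assume x: "x \<in> Delta pop"
  have "x$s \<le> (\<Sum>t\<in>{t. pop t = pop s}. x$t)"
    by (rule member_le_sum) (use x Delta_nonneg in auto)
  thus ?thesis using Delta_sum[OF x] by simp
qed

lemma convex_Delta: "convex (Delta pop)"
  unfolding convex_def
proof (intro ballI allI impI)
  fix x y :: "real^'s" and u v :: real
  assume x: "x \<in> Delta pop" and y: "y \<in> Delta pop" and uv: "0 \<le> u" "0 \<le> v" "u + v = 1"
  show "u *\<^sub>R x + v *\<^sub>R y \<in> Delta pop"
    unfolding Delta_def using x y uv
    by (auto simp: Delta_nonneg sum.distrib sum_distrib_left[symmetric] Delta_sum)
qed

lemma closed_Delta: "closed (Delta pop)"
proof -
  have "Delta pop = (\<Inter>s. {x. 0 \<le> x$s}) \<inter> (\<Inter>i. {x. (\<Sum>s\<in>{s. pop s = i}. x$s) = 1})"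
    unfolding Delta_def by auto
  moreover have "closed {x::real^'s. 0 \<le> x$s}" for s
    by (rule closed_Collect_le) (auto intro: continuous_intros)
  moreover have "closed {x::real^'s. (\<Sum>s\<in>{s. pop s = i}. x$s) = 1}" for i
    by (rule closed_Collect_eq) (auto intro!: continuous_intros)
  ultimately show ?thesis by (auto intro!: closed_Int closed_INT)
qed

lemma bounded_Delta: "bounded (Delta pop)"
proof -
  have "norm x \<le> real CARD('s)" if "x \<in> Delta pop" for x :: "real^'s"
  proof -
    have "norm x \<le> (\<Sum>i\<in>UNIV. \<bar>x$i\<bar>)" by (rule norm_le_l1_cart)
    also have "\<dots> \<le> (\<Sum>i\<in>(UNIV::'s set). 1)"
      by (rule sum_mono) (use that Delta_nonneg Delta_le1 abs_le_iff in fastforce)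
    finally show ?thesis by simp
  qed
  thus ?thesis unfolding bounded_iff by blast
qed

lemma compact_Delta: "compact (Delta pop)"
  using closed_Delta bounded_Delta by (simp add: compact_eq_bounded_closed)

end

locale game =
  fixes pop :: "'s::finite \<Rightarrow> 'i::finite"
    and f :: "'s \<Rightarrow> real^'s \<Rightarrow> real"
    and f' :: "'s \<Rightarrow> real^'s \<Rightarrow> ((real^'s) \<Rightarrow>\<^sub>L real)"
    and U :: "(real^'s) set"
  assumes surjpop: "surj pop"
    and openU: "open U" and DU: "Delta pop \<subseteq> U"
    and C1: "\<And>s. C1_on U (f s) (f' s)"
    and indepD: "\<And>s k x. x \<in> U \<Longrightarrow> pop k = pop s \<Longrightarrow> blinfun_apply (f' s x) (axis k 1) = 0"
begin

lemma fder: "x \<in> U \<Longrightarrow> (f s has_derivative blinfun_apply (f' s x)) (at x)"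
  using C1[of s] by (simp add: C1_on_def)

lemma cont_f: "continuous_on (Delta pop) (f s)"
  by (rule continuous_at_imp_continuous_on) (use fder DU has_derivative_continuous in blast)

lemma lip_each: "\<exists>B. \<forall>x\<in>Delta pop. \<forall>y\<in>Delta pop. \<bar>f s x - f s y\<bar> \<le> B * norm (x - y)"
proof -
  have "continuous_on (Delta pop) (f' s)"
    using C1[of s] DU by (auto simp: C1_on_def intro: continuous_on_subset)
  hence "compact (f' s ` Delta pop)" using compact_Delta by (rule compact_continuous_image)
  then obtain B where B: "\<forall>x\<in>Delta pop. norm (f' s x) \<le> B"
    using compact_imp_bounded bounded_iff by (metis image_eqI)
  have "\<bar>f s x - f s y\<bar> \<le> B * norm (x - y)" if "x \<in> Delta pop" "y \<in> Delta pop" for x y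
  proof -
    have "norm (f s x - f s y) \<le> B * norm (x - y)"
    proof (rule differentiable_bound[OF convex_Delta _ _ that])
      fix z assume "z \<in> Delta pop"
      thus "(f s has_derivative blinfun_apply (f' s z)) (at z within Delta pop)"
        using fder DU has_derivative_at_withinI by blast
      show "onorm (blinfun_apply (f' s z)) \<le> B" using B \<open>z \<in> Delta pop\<close> by (simp add: norm_blinfun.rep_eq)
    qed
    thus ?thesis by simp
  qed
  thus ?thesis by blast
qed

lemma lip_f: "\<exists>L>0. \<forall>s. \<forall>x\<in>Delta pop. \<forall>y\<in>Delta pop. \<bar>f s x - f s y\<bar> \<le> L * norm (x - y)"
proof -
  obtain B where B: "\<And>s. \<forall>x\<in>Delta pop. \<forall>y\<in>Delta pop. \<bar>f s x - f s y\<bar> \<le> B s * norm (x - y)"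
    using lip_each by metis
  define L where "L = (\<Sum>s\<in>UNIV. \<bar>B s\<bar>) + 1"
  have BL: "B s \<le> L" for s
  proof -
    have "\<bar>B s\<bar> \<le> (\<Sum>s\<in>UNIV. \<bar>B s\<bar>)" by (rule member_le_sum) auto
    thus ?thesis unfolding L_def by linarith
  qed
  have "L > 0" unfolding L_def by (simp add: sum_nonneg add_nonneg_pos)
  moreover have "\<bar>f s x - f s y\<bar> \<le> L * norm (x - y)" if "x \<in> Delta pop" "y \<in> Delta pop" for s x y
    using B[of s] that BL[of s] by (meson mult_right_mono norm_ge_zero order_trans)
  ultimately show ?thesis by blast
qed

lemma bnd_f: "\<exists>F0>0. \<forall>s. \<forall>x\<in>Delta pop. \<bar>f s x\<bar> \<le> F0"
proof -
  have "\<exists>B. \<forall>x\<in>Delta pop. \<bar>f s x\<bar> \<le> B" for s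
  proof -
    have "compact (f s ` Delta pop)" by (rule compact_continuous_image[OF cont_f compact_Delta])
    thus ?thesis using compact_imp_bounded bounded_iff by (metis image_eqI real_norm_def)
  qed
  then obtain B where B: "\<And>s. \<forall>x\<in>Delta pop. \<bar>f s x\<bar> \<le> B s" by metis
  define L where "L = (\<Sum>s\<in>UNIV. \<bar>B s\<bar>) + 1"
  have BL: "B s \<le> L" for s
  proof -
    have "\<bar>B s\<bar> \<le> (\<Sum>s\<in>UNIV. \<bar>B s\<bar>)" by (rule member_le_sum) auto
    thus ?thesis unfolding L_def by linarith
  qed
  have "L > 0" unfolding L_def by (simp add: sum_nonneg add_nonneg_pos)
  thus ?thesis using B BL by (meson order_trans)
qed

lemma replace_Delta:
  assumes x: "x \<in> Delta pop" and z: "z \<in> Delta_pop pop i"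
  shows "replace_pop pop i x z \<in> Delta pop"
proof -
  have "(\<Sum>s\<in>{s. pop s = j}. replace_pop pop i x z $ s) = 1" for j
  proof (cases "j = i")
    case True
    hence "(\<Sum>s\<in>{s. pop s = j}. replace_pop pop i x z $ s) = (\<Sum>s\<in>{s. pop s = i}. z $ s)"
      by (intro sum.cong) (auto simp: replace_pop_def)
    thus ?thesis using z by (simp add: Delta_pop_def)
  next
    case False
    hence "(\<Sum>s\<in>{s. pop s = j}. replace_pop pop i x z $ s) = (\<Sum>s\<in>{s. pop s = j}. x $ s)"
      by (intro sum.cong) (auto simp: replace_pop_def)
    thus ?thesis using x by (simp add: Delta_sum)
  qed
  moreover have "0 \<le> replace_pop pop i x z $ s" for s
    using x z by (auto simp: replace_pop_def Delta_pop_def Delta_nonneg)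
  ultimately show ?thesis by (simp add: Delta_def)
qed

lemma fprime_zero:
  assumes q: "q \<in> U" and v: "\<And>k. pop k \<noteq> pop s \<Longrightarrow> v $ k = 0"
  shows "blinfun_apply (f' s q) v = 0"
proof -
  have "v = (\<Sum>k\<in>UNIV. (v$k) *\<^sub>R axis k 1)"
    using basis_expansion[of v] by (simp add: scalar_mult_eq_scaleR)
  hence "blinfun_apply (f' s q) v = blinfun_apply (f' s q) (\<Sum>k\<in>UNIV. (v$k) *\<^sub>R axis k 1)" by simp
  also have "\<dots> = (\<Sum>k\<in>UNIV. (v$k) * blinfun_apply (f' s q) (axis k 1))"
    by (simp add: blinfun.sum_right blinfun.scaleR_right)
  also have "\<dots> = 0"
    by (rule sum.neutral) (use v indepD[OF q] in force)
  finally show ?thesis .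
qed

lemma indep:
  assumes x: "x \<in> Delta pop" and z: "z \<in> Delta_pop pop (pop s)"
  shows "f s (replace_pop pop (pop s) x z) = f s x"
proof -
  define w where "w = replace_pop pop (pop s) x z"
  have w: "w \<in> Delta pop" unfolding w_def by (rule replace_Delta[OF x z])
  define p where "p t = x + t *\<^sub>R (w - x)" for t
  have pD: "p t \<in> Delta pop" if "t \<in> {0..1}" for t
  proof -
    have "p t = (1 - t) *\<^sub>R x + t *\<^sub>R w" unfolding p_def by (simp add: algebra_simps)
    thus ?thesis using convex_Delta[of pop, unfolded convex_def, rule_format, of x w "1-t" t] x w that by auto
  qed
  have wx: "(w - x) $ k = 0" if "pop k \<noteq> pop s" for k
    using that by (simp add: w_def replace_pop_def)
  have "((\<lambda>t. f s (p t)) has_field_derivative 0) (at t within {0..1})" if t: "t \<in> {0..1}" for t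
  proof -
    have dp: "(p has_derivative (\<lambda>h. h *\<^sub>R (w - x))) (at t within {0..1})"
      unfolding p_def by (auto intro!: derivative_eq_intros)
    have df: "(f s has_derivative blinfun_apply (f' s (p t))) (at (p t))"
      using fder DU pD[OF t] by blast
    have "((\<lambda>t. f s (p t)) has_derivative (\<lambda>h. blinfun_apply (f' s (p t)) (h *\<^sub>R (w - x)))) (at t within {0..1})"
      using diff_chain_within[OF dp has_derivative_at_withinI[OF df]] by (simp add: o_def)
    moreover have "(\<lambda>h. blinfun_apply (f' s (p t)) (h *\<^sub>R (w - x))) = (*) 0"
      using fprime_zero[where q="p t" and v="w - x" and s=s] wx DU pD[OF t]
      by (auto simp: blinfun.scaleR_right fun_eq_iff)
    ultimately show ?thesis by (simp add: has_field_derivative_def)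
  qed
  then obtain c where "\<forall>t\<in>{0..1}. f s (p t) = c"
    using has_field_derivative_zero_constant[OF convex_real_interval(5)] by blast
  hence "f s (p 1) = f s (p 0)" by auto
  thus ?thesis unfolding p_def w_def by simp
qed

lemma int_Delta_ne: "\<exists>c. c \<in> int_Delta pop"
proof -
  define c :: "real^'s" where "c = (\<chi> s. 1 / real (card {t. pop t = pop s}))"
  have cpos: "card {t. pop t = i} > 0" for i
  proof -
    obtain t where "pop t = i" using surjpop by (metis surj_def)
    thus ?thesis by (auto simp: card_gt_0_iff)
  qed
  have "(\<Sum>s\<in>{s. pop s = i}. c$s) = 1" for i
  proof -
    have "(\<Sum>s\<in>{s. pop s = i}. c$s) = (\<Sum>s\<in>{s. pop s = i}. 1 / real (card {t. pop t = i}))"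
      by (intro sum.cong) (auto simp: c_def)
    also have "\<dots> = 1" using cpos[of i] surjpop by (simp add: surj_def, metis)
    finally show ?thesis .
  qed
  moreover have "0 < c$s" for s using cpos[of "pop s"] by (simp add: c_def)
  ultimately have "c \<in> int_Delta pop" by (auto simp: int_Delta_def Delta_def less_imp_le)
  thus ?thesis by blast
qed


lemma lip_g: "\<exists>Lg>0. \<forall>s. \<forall>x\<in>Delta pop. \<forall>y\<in>Delta pop. \<bar>gfit pop f s x - gfit pop f s y\<bar> \<le> Lg * norm (x - y)"
proof -
  obtain L where L: "L > 0" "\<And>s x y. x\<in>Delta pop \<Longrightarrow> y\<in>Delta pop \<Longrightarrow> \<bar>f s x - f s y\<bar> \<le> L * norm (x - y)"
    using lip_f by blast
  obtain F0 where F0: "F0 > 0" "\<And>s x. x\<in>Delta pop \<Longrightarrow> \<bar>f s x\<bar> \<le> F0"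
    using bnd_f by blast
  define Lg where "Lg = L + real CARD('s) * (F0 + L)"
  have "\<bar>gfit pop f s x - gfit pop f s y\<bar> \<le> Lg * norm (x - y)" if x: "x\<in>Delta pop" and y: "y\<in>Delta pop" for s x y
  proof -
    let ?d = "norm (x - y)"
    have trm: "\<bar>x$t * f t x - y$t * f t y\<bar> \<le> (F0 + L) * ?d" for t
    proof -
      have e: "x$t * f t x - y$t * f t y = (x$t - y$t) * f t x + y$t * (f t x - f t y)" by (simp add: algebra_simps)
      have c: "\<bar>x$t - y$t\<bar> \<le> ?d" using component_le_norm_cart[of "x - y" t] by simp
      have "\<bar>(x$t - y$t) * f t x\<bar> \<le> ?d * F0"
        unfolding abs_mult by (rule mult_mono) (use c F0(2)[OF x] in auto)
      moreover have "\<bar>y$t * (f t x - f t y)\<bar> \<le> 1 * (L * ?d)"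
        unfolding abs_mult by (rule mult_mono) (use L(2)[OF x y] Delta_nonneg[OF y] Delta_le1[OF y] in auto)
      ultimately show ?thesis unfolding e by (simp add: algebra_simps)
    qed
    have fbl: "\<bar>fbar pop f i x - fbar pop f i y\<bar> \<le> real CARD('s) * ((F0 + L) * ?d)" for i
    proof -
      have "\<bar>fbar pop f i x - fbar pop f i y\<bar> = \<bar>\<Sum>t\<in>{t. pop t = i}. x$t * f t x - y$t * f t y\<bar>"
        by (simp add: fbar_def sum_subtractf)
      also have "\<dots> \<le> (\<Sum>t\<in>{t. pop t = i}. \<bar>x$t * f t x - y$t * f t y\<bar>)" by (rule sum_abs)
      also have "\<dots> \<le> (\<Sum>t\<in>UNIV. \<bar>x$t * f t x - y$t * f t y\<bar>)" by (rule sum_mono2) auto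
      also have "\<dots> \<le> (\<Sum>t\<in>(UNIV::'s set). (F0 + L) * ?d)" by (rule sum_mono) (rule trm)
      finally show ?thesis by simp
    qed
    have "\<bar>gfit pop f s x - gfit pop f s y\<bar> \<le> L * ?d + real CARD('s) * ((F0 + L) * ?d)"
      using L(2)[OF x y, of s] fbl[of "pop s"] unfolding gfit_def by (smt (verit))
    thus ?thesis unfolding Lg_def by (simp add: algebra_simps)
  qed
  moreover have "Lg > 0" unfolding Lg_def using L F0 by (simp add: add_pos_nonneg)
  ultimately show ?thesis by blast
qed

lemma bnd_g: "\<exists>G>0. \<forall>s. \<forall>x\<in>Delta pop. \<bar>gfit pop f s x\<bar> \<le> G"
proof -
  obtain F0 where F0: "F0 > 0" "\<And>s x. x\<in>Delta pop \<Longrightarrow> \<bar>f s x\<bar> \<le> F0"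
    using bnd_f by blast
  have "\<bar>gfit pop f s x\<bar> \<le> F0 + real CARD('s) * F0" if x: "x \<in> Delta pop" for s x
  proof -
    have fbb: "\<bar>fbar pop f i x\<bar> \<le> real CARD('s) * F0" for i
    proof -
      have "\<bar>fbar pop f i x\<bar> \<le> (\<Sum>t\<in>{t. pop t = i}. \<bar>x$t * f t x\<bar>)" unfolding fbar_def by (rule sum_abs)
      also have "\<dots> \<le> (\<Sum>t\<in>UNIV. \<bar>x$t * f t x\<bar>)" by (rule sum_mono2) auto
      also have "\<dots> \<le> (\<Sum>t\<in>(UNIV::'s set). F0)"
      proof (rule sum_mono)
        fix t
        have "\<bar>x$t * f t x\<bar> \<le> 1 * F0" unfolding abs_mult
          by (rule mult_mono) (use F0(2)[OF x] Delta_nonneg[OF x] Delta_le1[OF x] in auto)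
        thus "\<bar>x$t * f t x\<bar> \<le> F0" by simp
      qed
      finally show ?thesis by simp
    qed
    thus ?thesis using F0(2)[OF x, of s] unfolding gfit_def by (smt (verit) fbb[of "pop s"])
  qed
  moreover have "F0 + real CARD('s) * F0 > 0" using F0 by (simp add: add_pos_nonneg)
  ultimately show ?thesis by blast
qed

definition evec :: "'s \<Rightarrow> real^'s" where "evec t = (\<chi> s. if s = t then 1 else 0)"

lemma evec_Delta_pop: "evec t \<in> Delta_pop pop (pop t)"
proof -
  have "(\<Sum>s\<in>{s. pop s = pop t}. evec t $ s) = (\<Sum>s\<in>{s. pop s = pop t}. if s = t then 1 else 0)"
    by (simp add: evec_def)
  also have "\<dots> = 1" by (simp add: sum.delta)
  finally show ?thesis by (simp add: Delta_pop_def evec_def)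
qed

lemma fbar_evec:
  assumes x: "x \<in> Delta pop"
  shows "fbar pop f (pop t) (replace_pop pop (pop t) x (evec t)) = f t x"
proof -
  have "fbar pop f (pop t) (replace_pop pop (pop t) x (evec t)) =
     (\<Sum>s\<in>{s. pop s = pop t}. if s = t then f t (replace_pop pop (pop t) x (evec t)) else 0)"
    unfolding fbar_def by (intro sum.cong) (auto simp: replace_pop_def evec_def)
  also have "\<dots> = f t (replace_pop pop (pop t) x (evec t))" by (simp add: sum.delta)
  also have "\<dots> = f t x" by (rule indep[OF x evec_Delta_pop])
  finally show ?thesis .
qed

end

locale nash = game +
  fixes xstar :: "real^'s"
  assumes SN: "strict_nash pop f xstar"
begin

lemma xsD: "xstar \<in> Delta pop" using SN by (simp add: strict_nash_def)

lemma pure_i: "\<exists>t. pop t = i \<and> (\<forall>s. pop s = i \<longrightarrow> xstar$s = (if s = t then 1 else 0))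
   \<and> (\<forall>k. pop k = i \<and> k \<noteq> t \<longrightarrow> f k xstar < f t xstar)"
proof -
  let ?S = "{t. pop t = i}"
  have ne: "?S \<noteq> {}" using surjpop by (auto simp: surj_def) (metis)
  let ?m = "Max ((\<lambda>t. f t xstar) ` ?S)"
  have "?m \<in> (\<lambda>t. f t xstar) ` ?S" by (rule Max_in) (use ne in auto)
  then obtain t where t: "pop t = i" "f t xstar = ?m" by auto
  have tmax: "f k xstar \<le> f t xstar" if "pop k = i" for k
    using t(2) that by (simp add: Max_ge)
  have fb_le: "fbar pop f i xstar \<le> f t xstar"
  proof -
    have "fbar pop f i xstar \<le> (\<Sum>s\<in>?S. xstar$s * f t xstar)"
      unfolding fbar_def by (rule sum_mono) (use tmax Delta_nonneg[OF xsD] in \<open>auto intro: mult_left_mono\<close>)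
    also have "\<dots> = f t xstar" using Delta_sum[OF xsD, of i] by (simp add: sum_distrib_right[symmetric])
    finally show ?thesis .
  qed
  have snd: "fbar pop f i xstar > fbar pop f i (replace_pop pop i xstar z)"
    if "z \<in> Delta_pop pop i" "\<exists>s. pop s = i \<and> z$s \<noteq> xstar$s" for z
    using SN that unfolding strict_nash_def by blast
  have eq: "xstar$s = (if s = t then 1 else 0)" if "pop s = i" for s
  proof (rule ccontr)
    assume "xstar$s \<noteq> (if s = t then 1 else 0)"
    hence "\<exists>s. pop s = i \<and> evec t $ s \<noteq> xstar$s" using that by (auto simp: evec_def)
    from snd[OF _ this] evec_Delta_pop[of t] t(1) fbar_evec[OF xsD, of t] fb_le
    show False by auto
  qed
  have fbt: "fbar pop f i xstar = f t xstar"
  proof -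
    have "fbar pop f i xstar = (\<Sum>s\<in>?S. if s = t then f t xstar else 0)"
      unfolding fbar_def by (intro sum.cong) (auto simp: eq)
    thus ?thesis using t(1) by (simp add: sum.delta)
  qed
  have "f k xstar < f t xstar" if "pop k = i" "k \<noteq> t" for k
  proof -
    have "\<exists>s. pop s = i \<and> evec k $ s \<noteq> xstar$s"
      using that eq[of k] by (auto simp: evec_def intro!: exI[of _ k])
    from snd[OF _ this] evec_Delta_pop[of k] that fbar_evec[OF xsD, of k] fbt
    show ?thesis by auto
  qed
  thus ?thesis using t(1) eq by blast
qed


definition "hh i = (SOME t. pop t = i \<and> (\<forall>s. pop s = i \<longrightarrow> xstar$s = (if s = t then 1 else 0))
   \<and> (\<forall>k. pop k = i \<and> k \<noteq> t \<longrightarrow> f k xstar < f t xstar))"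

lemma hh: "pop (hh i) = i" "pop s = i \<Longrightarrow> xstar$s = (if s = hh i then 1 else 0)"
   "pop k = i \<Longrightarrow> k \<noteq> hh i \<Longrightarrow> f k xstar < f (hh i) xstar"
  using someI_ex[OF pure_i[of i]] unfolding hh_def[symmetric] by blast+

definition "mn s \<longleftrightarrow> s \<noteq> hh (pop s)"

lemma xstar_mn: "mn s \<Longrightarrow> xstar$s = 0" and xstar_nmn: "\<not> mn s \<Longrightarrow> xstar$s = 1"
  using hh(2)[of s "pop s"] by (auto simp: mn_def)

lemma fbar_xstar: "fbar pop f i xstar = f (hh i) xstar"
proof -
  have "fbar pop f i xstar = (\<Sum>s\<in>{s. pop s = i}. if s = hh i then f (hh i) xstar else 0)"
    unfolding fbar_def by (intro sum.cong) (auto simp: hh(2))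
  thus ?thesis using hh(1)[of i] by (simp add: sum.delta)
qed

lemma g_xstar_neg: "mn s \<Longrightarrow> gfit pop f s xstar < 0"
  using hh(3)[of s "pop s"] by (simp add: gfit_def fbar_xstar mn_def)

lemma sum_pop_split:
  fixes F :: "'s \<Rightarrow> real"
  shows "(\<Sum>t\<in>{t. pop t = i}. F t) = F (hh i) + (\<Sum>t\<in>{t. pop t = i \<and> mn t}. F t)"
proof -
  have "{t. pop t = i} = insert (hh i) {t. pop t = i \<and> mn t}" using hh(1)[of i] by (auto simp: mn_def)
  moreover have "hh i \<notin> {t. pop t = i \<and> mn t}" by (auto simp: mn_def hh(1))
  ultimately show ?thesis by simp
qed

lemma sum_by_pop:
  fixes F :: "'s \<Rightarrow> real"
  shows "(\<Sum>t\<in>A. F t) = (\<Sum>i\<in>UNIV. \<Sum>t\<in>{t\<in>A. pop t = i}. F t)"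
  by (rule sum.group[symmetric]) auto

lemma regroup_mn:
  fixes F :: "'s \<Rightarrow> real"
  shows "(\<Sum>i\<in>UNIV. \<Sum>t\<in>{t. pop t = i \<and> mn t}. F t) = (\<Sum>t\<in>{t. mn t}. F t)"
proof -
  have e: "{t \<in> {t. mn t}. pop t = i} = {t. pop t = i \<and> mn t}" for i by blast
  show ?thesis using sum_by_pop[where A="{t. mn t}" and F=F] unfolding e by (rule sym)
qed

lemma regroup_all:
  fixes F :: "'s \<Rightarrow> real"
  shows "(\<Sum>i\<in>UNIV. \<Sum>t\<in>{t. pop t = i}. F t) = (\<Sum>t\<in>UNIV. F t)"
proof -
  have e: "{t \<in> UNIV. pop t = i} = {t. pop t = i}" for i by blast
  show ?thesis using sum_by_pop[where A="UNIV" and F=F] unfolding e by (rule sym)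
qed

lemma l1_le_mn:
  assumes x: "x \<in> Delta pop" and y: "y \<in> Delta pop"
  shows "(\<Sum>t\<in>UNIV. \<bar>y$t - x$t\<bar>) \<le> 2 * (\<Sum>t\<in>{t. mn t}. \<bar>y$t - x$t\<bar>)"
proof -
  have per: "(\<Sum>t\<in>{t. pop t = i}. \<bar>y$t - x$t\<bar>) \<le> 2 * (\<Sum>t\<in>{t. pop t = i \<and> mn t}. \<bar>y$t - x$t\<bar>)" for i
  proof -
    have s0: "(\<Sum>t\<in>{t. pop t = i}. y$t - x$t) = 0"
      using Delta_sum[OF x, of i] Delta_sum[OF y, of i] by (simp add: sum_subtractf)
    have sp: "(\<Sum>t\<in>{t. pop t = i}. y$t - x$t) = (y$(hh i) - x$(hh i)) + (\<Sum>t\<in>{t. pop t = i \<and> mn t}. y$t - x$t)"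
      by (rule sum_pop_split)
    have "y$(hh i) - x$(hh i) = - (\<Sum>t\<in>{t. pop t = i \<and> mn t}. y$t - x$t)"
      using s0 sp by linarith
    hence "\<bar>y$(hh i) - x$(hh i)\<bar> = \<bar>\<Sum>t\<in>{t. pop t = i \<and> mn t}. y$t - x$t\<bar>" by simp
    also have "\<dots> \<le> (\<Sum>t\<in>{t. pop t = i \<and> mn t}. \<bar>y$t - x$t\<bar>)" by (rule sum_abs)
    finally have h: "\<bar>y$(hh i) - x$(hh i)\<bar> \<le> (\<Sum>t\<in>{t. pop t = i \<and> mn t}. \<bar>y$t - x$t\<bar>)" .
    have "(\<Sum>t\<in>{t. pop t = i}. \<bar>y$t - x$t\<bar>) = \<bar>y$(hh i) - x$(hh i)\<bar> + (\<Sum>t\<in>{t. pop t = i \<and> mn t}. \<bar>y$t - x$t\<bar>)"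
      by (rule sum_pop_split)
    thus ?thesis using h by linarith
  qed
  have "(\<Sum>t\<in>UNIV. \<bar>y$t - x$t\<bar>) = (\<Sum>i\<in>UNIV. \<Sum>t\<in>{t. pop t = i}. \<bar>y$t - x$t\<bar>)"
    by (rule regroup_all[symmetric])
  also have "\<dots> \<le> (\<Sum>i\<in>UNIV. 2 * (\<Sum>t\<in>{t. pop t = i \<and> mn t}. \<bar>y$t - x$t\<bar>))"
    by (rule sum_mono) (rule per)
  also have "\<dots> = 2 * (\<Sum>i\<in>UNIV. (\<Sum>t\<in>{t. pop t = i \<and> mn t}. \<bar>y$t - x$t\<bar>))"
    by (rule sum_distrib_left[symmetric])
  also have "\<dots> = 2 * (\<Sum>t\<in>{t. mn t}. \<bar>y$t - x$t\<bar>)"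
    by (simp only: regroup_mn)
  finally show ?thesis .
qed

lemma norm_le_mn:
  assumes x: "x \<in> Delta pop" and y: "y \<in> Delta pop"
  shows "norm (y - x) \<le> 2 * (\<Sum>t\<in>{t. mn t}. \<bar>y$t - x$t\<bar>)"
  using norm_le_l1_cart[of "y - x"] l1_le_mn[OF x y] by simp

lemma norm_xstar_le:
  assumes x: "x \<in> Delta pop" and r: "\<And>s. mn s \<Longrightarrow> x$s \<le> r" and r0: "0 \<le> r"
  shows "norm (x - xstar) \<le> 2 * real CARD('s) * r"
proof -
  have "norm (x - xstar) \<le> 2 * (\<Sum>t\<in>{t. mn t}. \<bar>x$t - xstar$t\<bar>)" by (rule norm_le_mn[OF xsD x])
  also have "(\<Sum>t\<in>{t. mn t}. \<bar>x$t - xstar$t\<bar>) \<le> (\<Sum>t\<in>{t. mn t}. r)"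
    by (rule sum_mono) (use r Delta_nonneg[OF x] xstar_mn in auto)
  also have "(\<Sum>t\<in>{t. mn t}. r) \<le> real CARD('s) * r"
    using card_mono[of UNIV "{t. mn t}"] r0 by (simp add: mult_right_mono)
  finally show ?thesis by simp
qed

lemma region: "\<exists>a>0. \<exists>r0>0. \<forall>x\<in>Delta pop. (\<forall>s. mn s \<longrightarrow> x$s \<le> r0) \<longrightarrow> (\<forall>s. mn s \<longrightarrow> gfit pop f s x \<le> - a)"
proof -
  obtain Lg where Lg: "Lg > 0" "\<And>s x y. x\<in>Delta pop \<Longrightarrow> y\<in>Delta pop \<Longrightarrow> \<bar>gfit pop f s x - gfit pop f s y\<bar> \<le> Lg * norm (x - y)"
    using lip_g by blast
  define A where "A = insert 1 ((\<lambda>s. - gfit pop f s xstar / 2) ` {s. mn s})"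
  define a where "a = Min A"
  have finA: "finite A" "A \<noteq> {}" unfolding A_def by auto
  have "a \<in> A" unfolding a_def using finA by (rule Min_in)
  hence apos: "a > 0" unfolding A_def using g_xstar_neg by auto
  have ale: "a \<le> - gfit pop f s xstar / 2" if "mn s" for s
    unfolding a_def using finA that by (intro Min_le) (auto simp: A_def)
  define r0 where "r0 = a / (2 * real CARD('s) * Lg)"
  have r0pos: "r0 > 0" unfolding r0_def using apos Lg by simp
  have "gfit pop f s x \<le> - a" if x: "x \<in> Delta pop" and xr: "\<forall>s. mn s \<longrightarrow> x$s \<le> r0" and s: "mn s" for x s
  proof -
    have n: "norm (x - xstar) \<le> 2 * real CARD('s) * r0" using norm_xstar_le[OF x _ less_imp_le[OF r0pos]] xr by blast
    have "Lg * (2 * real CARD('s) * r0) = a" unfolding r0_def using Lg by simp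
    hence "Lg * norm (x - xstar) \<le> a" using n Lg(1) by (metis mult_left_mono less_imp_le)
    moreover have "gfit pop f s x \<le> gfit pop f s xstar + Lg * norm (x - xstar)"
      using Lg(2)[OF x xsD, of s] by linarith
    ultimately show ?thesis using ale[OF s] by linarith
  qed
  thus ?thesis using apos r0pos by blast
qed

lemma sum_xg_zero:
  assumes x: "x \<in> Delta pop"
  shows "(\<Sum>s\<in>{s. pop s = i}. x$s * gfit pop f s x) = 0"
proof -
  have "(\<Sum>s\<in>{s. pop s = i}. x$s * gfit pop f s x) = (\<Sum>s\<in>{s. pop s = i}. x$s * f s x - x$s * fbar pop f i x)"
    by (intro sum.cong) (auto simp: gfit_def algebra_simps)
  also have "\<dots> = fbar pop f i x - (\<Sum>s\<in>{s. pop s = i}. x$s) * fbar pop f i x"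
    by (simp only: sum_subtractf fbar_def sum_distrib_right)
  also have "\<dots> = 0" using Delta_sum[OF x] by simp
  finally show ?thesis .
qed

lemma cont_g: "continuous_on (Delta pop) (gfit pop f s)"
  unfolding gfit_def fbar_def using cont_f by (auto intro!: continuous_intros)

lemma exist_eq:
  assumes a: "a > 0" and r0: "r0 > 0"
    and reg: "\<forall>x\<in>Delta pop. (\<forall>s. mn s \<longrightarrow> x$s \<le> r0) \<longrightarrow> (\<forall>s. mn s \<longrightarrow> gfit pop f s x \<le> - a)"
    and c: "c \<in> Delta pop" and M: "0 < M" and r: "r \<le> r0" "M \<le> a * r"
  shows "\<exists>x\<in>Delta pop. (\<forall>s. mn s \<longrightarrow> x$s \<le> r) \<and> phi pop f c M x = 0"
proof -
  obtain G where G: "G > 0" "\<And>s x. x\<in>Delta pop \<Longrightarrow> \<bar>gfit pop f s x\<bar> \<le> G"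
    using bnd_g by blast
  define \<tau> where "\<tau> = 1 / (G + M + 1)"
  have tau: "\<tau> > 0" "\<tau> * (G + M) \<le> 1" using G M by (auto simp: \<tau>_def field_simps)
  have "0 < a * r" using M r by linarith
  hence rpos: "r > 0" using a zero_less_mult_pos by blast
  define K where "K = Delta pop \<inter> {x. \<forall>s. mn s \<longrightarrow> x$s \<le> r}"
  define T where "T x = x + \<tau> *\<^sub>R phi pop f c M x" for x
  have clK: "closed {x::real^'s. \<forall>s. mn s \<longrightarrow> x$s \<le> r}"
    by (intro closed_Collect_all closed_Collect_imp) (auto intro!: closed_Collect_le continuous_intros)
  have "compact K" unfolding K_def by (rule compact_Int_closed[OF compact_Delta clK])
  moreover have "convex K" unfolding K_def
    by (rule convex_Int[OF convex_Delta]) (auto simp: convex_def intro!: convex_bound_le)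
  moreover have "xstar \<in> K" unfolding K_def using xsD xstar_mn rpos by auto
  moreover have "continuous_on K T"
  proof -
    have "continuous_on (Delta pop) T" unfolding T_def phi_def
      using cont_g by (auto intro!: continuous_intros)
    thus ?thesis by (rule continuous_on_subset) (auto simp: K_def)
  qed
  moreover have "T \<in> K \<rightarrow> K"
  proof
    fix x assume "x \<in> K"
    hence x: "x \<in> Delta pop" and xr: "\<And>s. mn s \<Longrightarrow> x$s \<le> r" by (auto simp: K_def)
    have Ts: "T x $ s = x$s * (1 + \<tau> * (gfit pop f s x - M)) + \<tau> * M * c$s" for s
      by (simp add: T_def phi_def algebra_simps)
    have fac: "0 \<le> 1 + \<tau> * (gfit pop f s x - M)" for s
    proof -
      have "- G \<le> gfit pop f s x" using G(2)[OF x, of s] by linarith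
      hence "\<tau> * (- G - M) \<le> \<tau> * (gfit pop f s x - M)" using tau by (intro mult_left_mono) auto
      thus ?thesis using tau by (simp add: algebra_simps)
    qed
    have nn: "0 \<le> T x $ s" for s
      unfolding Ts using fac[of s] Delta_nonneg[OF x, of s] Delta_nonneg[OF c, of s] tau M by simp
    have sm: "(\<Sum>s\<in>{s. pop s = i}. T x $ s) = 1" for i
    proof -
      have "(\<Sum>s\<in>{s. pop s = i}. T x $ s) = (\<Sum>s\<in>{s. pop s = i}. x$s + \<tau> * (x$s * gfit pop f s x) + (\<tau> * M) * c$s - (\<tau> * M) * x$s)"
        by (intro sum.cong) (simp_all add: T_def phi_def algebra_simps)
      also have "\<dots> = (\<Sum>s\<in>{s. pop s = i}. x$s) + \<tau> * (\<Sum>s\<in>{s. pop s = i}. x$s * gfit pop f s x)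
           + \<tau> * M * ((\<Sum>s\<in>{s. pop s = i}. c$s) - (\<Sum>s\<in>{s. pop s = i}. x$s))"
        by (simp only: sum.distrib sum_subtractf sum_distrib_left[symmetric] right_diff_distrib)
      finally have "(\<Sum>s\<in>{s. pop s = i}. T x $ s) = (\<Sum>s\<in>{s. pop s = i}. x$s) + \<tau> * (\<Sum>s\<in>{s. pop s = i}. x$s * gfit pop f s x)
           + \<tau> * M * ((\<Sum>s\<in>{s. pop s = i}. c$s) - (\<Sum>s\<in>{s. pop s = i}. x$s))" .
      thus ?thesis using sum_xg_zero[OF x, of i] Delta_sum[OF x, of i] Delta_sum[OF c, of i] by simp
    qed
    have mnb: "T x $ s \<le> r" if s: "mn s" for s
    proof -
      have g: "gfit pop f s x \<le> - a" using reg x xr r(1) s by force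
      have "x$s * (1 + \<tau> * (gfit pop f s x - M)) \<le> r * (1 + \<tau> * (gfit pop f s x - M))"
        by (rule mult_right_mono[OF xr[OF s] fac])
      also have "\<dots> \<le> r * (1 - \<tau> * a)"
      proof -
        have "\<tau> * (gfit pop f s x - M) \<le> \<tau> * (- a)" using g M tau by (intro mult_left_mono) auto
        hence "1 + \<tau> * (gfit pop f s x - M) \<le> 1 - \<tau> * a" by simp
        thus ?thesis using rpos by (intro mult_left_mono) auto
      qed
      finally have A: "x$s * (1 + \<tau> * (gfit pop f s x - M)) \<le> r * (1 - \<tau> * a)" .
      have B: "\<tau> * M * c$s \<le> \<tau> * M" using Delta_le1[OF c, of s] tau M by simp
      have "\<tau> * M \<le> \<tau> * (a * r)" using r(2) tau by simp
      thus ?thesis unfolding Ts using A B by (simp add: algebra_simps)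
    qed
    show "T x \<in> K" using nn sm mnb by (auto simp: K_def Delta_def)
  qed
  ultimately obtain x where x: "x \<in> K" "T x = x" using brouwer[of K T] by blast
  hence "\<tau> *\<^sub>R phi pop f c M x = 0" unfolding T_def by (metis add_cancel_left_right)
  hence "phi pop f c M x = 0" using tau by simp
  thus ?thesis using x by (auto simp: K_def)
qed

end


lemma decay_aux:
  fixes V V' :: "real \<Rightarrow> real"
  assumes der: "\<And>t. t \<ge> 0 \<Longrightarrow> (V has_real_derivative V' t) (at t within {0..})"
    and dec: "\<And>t. t \<ge> 0 \<Longrightarrow> V t < B \<Longrightarrow> V' t \<le> - a * V t"
    and t: "0 < t" and below: "\<And>s. 0 \<le> s \<Longrightarrow> s < t \<Longrightarrow> V s < B"
  shows "V t * exp (a * t) \<le> V 0"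
proof -
  define W where "W s = V s * exp (a * s)" for s
  define W' where "W' s = V' s * exp (a * s) + V s * (a * exp (a * s))" for s
  have dW: "(W has_real_derivative W' s) (at s within {0..})" if "s \<ge> 0" for s
    unfolding W_def W'_def
    by (rule derivative_eq_intros der[OF that] | simp)+
  have contW: "continuous_on {0..t} W"
  proof -
    have "continuous_on {0..} W"
      unfolding continuous_on_eq_continuous_within using dW DERIV_continuous by fastforce
    thus ?thesis by (rule continuous_on_subset) auto
  qed
  have dWat: "(W has_real_derivative W' s) (at s)" if "0 < s" for s
  proof -
    have "s \<in> interior {0::real..}" using that by simp
    thus ?thesis using dW[of s] that at_within_interior by fastforce
  qed
  obtain l z where lz: "0 < z" "z < t" "DERIV W z :> l" "W t - W 0 = (t - 0) * l"
    using MVT[OF t contW] dWat real_differentiable_def by (metis diff_zero)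
  have "l = W' z" using DERIV_unique[OF lz(3) dWat[OF lz(1)]] .
  moreover have "W' z \<le> 0"
  proof -
    have "V' z \<le> - a * V z" using dec[of z] below[of z] lz by auto
    hence "V' z + a * V z \<le> 0" by simp
    hence "(V' z + a * V z) * exp (a * z) \<le> 0" by (simp add: mult_nonpos_nonneg)
    thus ?thesis unfolding W'_def by (simp add: algebra_simps)
  qed
  ultimately have "t * l \<le> 0" using t by (simp add: mult_nonneg_nonpos)
  hence "W t \<le> W 0" using lz(4) by simp
  thus ?thesis unfolding W_def by simp
qed

lemma decay:
  fixes V V' :: "real \<Rightarrow> real"
  assumes der: "\<And>t. t \<ge> 0 \<Longrightarrow> (V has_real_derivative V' t) (at t within {0..})"
    and dec: "\<And>t. t \<ge> 0 \<Longrightarrow> V t < B \<Longrightarrow> V' t \<le> - a * V t"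
    and V0: "V 0 < B" and Vnn: "\<And>t. t \<ge> 0 \<Longrightarrow> 0 \<le> V t" and a: "a \<ge> 0"
  shows "\<And>t. t \<ge> 0 \<Longrightarrow> V t * exp (a * t) \<le> V 0"
proof -
  have allB: "V t < B" if "t \<ge> 0" for t
  proof (rule ccontr)
    assume "\<not> V t < B"
    define A where "A = {0..} \<inter> V -` {B..}"
    have contV: "continuous_on {0..} V"
      unfolding continuous_on_eq_continuous_within using der DERIV_continuous by fastforce
    have clA: "closed A" unfolding A_def by (rule continuous_closed_preimage[OF contV]) auto
    have tA: "t \<in> A" using that \<open>\<not> V t < B\<close> by (auto simp: A_def)
    have bdd: "bdd_below A" unfolding A_def by (rule bdd_belowI[of _ 0]) auto
    have t1A: "Inf A \<in> A" using closed_contains_Inf[OF _ bdd clA] tA by blast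
    hence t1: "Inf A \<ge> 0" "V (Inf A) \<ge> B" by (auto simp: A_def)
    have "Inf A \<noteq> 0" using t1 V0 by auto
    hence t1pos: "Inf A > 0" using t1 by simp
    have "V s < B" if "0 \<le> s" "s < Inf A" for s
    proof (rule ccontr)
      assume "\<not> V s < B"
      hence "s \<in> A" using that by (auto simp: A_def)
      hence "Inf A \<le> s" by (rule cInf_lower[OF _ bdd])
      thus False using that by simp
    qed
    from decay_aux[OF der dec t1pos this] have "V (Inf A) * exp (a * Inf A) \<le> V 0" by blast
    moreover have "V (Inf A) \<le> V (Inf A) * exp (a * Inf A)"
      using Vnn[OF t1(1)] a t1(1) by (simp add: mult_le_cancel_left1)
    ultimately show False using t1 V0 by linarith
  qed
  fix t :: real assume "t \<ge> 0"
  show "V t * exp (a * t) \<le> V 0"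
  proof (cases "t = 0")
    case True thus ?thesis by simp
  next
    case False
    hence "0 < t" using \<open>t \<ge> 0\<close> by simp
    from decay_aux[OF der dec this] allB show ?thesis by blast
  qed
qed


lemma norm_sq_sum: "(norm (x::real^'n))^2 = (\<Sum>i\<in>UNIV. (x$i)^2)"
  by (simp add: norm_vec_def L2_set_def sum_nonneg)

lemma sum_abs_sq: "(\<Sum>i\<in>A. \<bar>u i\<bar>)^2 \<le> real (card A) * (\<Sum>i\<in>A. (u i)^2 :: real)"
  using Cauchy_Schwarz_ineq_sum[of "\<lambda>i. \<bar>u i\<bar>" "\<lambda>i. 1" A] by (simp add: mult.commute)

context nash begin

lemma core:
  assumes a: "a > 0"
    and reg: "\<forall>x\<in>Delta pop. (\<forall>s. mn s \<longrightarrow> x$s \<le> r0) \<longrightarrow> (\<forall>s. mn s \<longrightarrow> gfit pop f s x \<le> - a)"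
    and Lg: "\<And>s x y. x\<in>Delta pop \<Longrightarrow> y\<in>Delta pop \<Longrightarrow> \<bar>gfit pop f s x - gfit pop f s y\<bar> \<le> Lg * norm (x - y)" "Lg > 0"
    and r1: "0 \<le> r1" "r1 \<le> r0/2" "4 * r1 * Lg * real (card {t. mn t}) \<le> a"
    and y: "y \<in> Delta pop" and xe: "xe \<in> Delta pop" and xer: "\<And>s. mn s \<Longrightarrow> xe$s \<le> r1"
    and eq: "phi pop f c M xe = 0" and M: "0 < M"
    and V: "(\<Sum>s\<in>{t. mn t}. (y$s - xe$s)^2) < (r0/2)^2"
  shows "(\<Sum>s\<in>{t. mn t}. 2 * (y$s - xe$s) * phi pop f c M y $ s) \<le> - a * (\<Sum>s\<in>{t. mn t}. (y$s - xe$s)^2)"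
proof -
  define u where "u s = y$s - xe$s" for s
  define N where "N = norm (y - xe)"
  define S1 where "S1 = (\<Sum>s\<in>{t. mn t}. \<bar>u s\<bar>)"
  define VV where "VV = (\<Sum>s\<in>{t. mn t}. (u s)^2)"
  define K where "K = real (card {t. mn t})"
  have r0: "0 \<le> r0" using r1 by linarith
  have ub: "\<bar>u s\<bar> < r0/2" if "mn s" for s
  proof -
    have h1: "(u s)^2 \<le> VV" unfolding VV_def by (rule member_le_sum) (use that in auto)
    have h2: "VV < (r0/2)^2" using V unfolding VV_def u_def .
    have "\<bar>u s\<bar>^2 = (u s)^2" by (rule power2_abs)
    hence "\<bar>u s\<bar>^2 < (r0/2)^2" using h1 h2 by linarith
    thus ?thesis by (rule power_less_imp_less_base) (use r0 in simp)
  qed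
  have ymn: "\<forall>s. mn s \<longrightarrow> y$s \<le> r0"
  proof (intro allI impI)
    fix s assume "mn s"
    have "y$s = xe$s + u s" by (simp add: u_def)
    thus "y$s \<le> r0" using ub[OF \<open>mn s\<close>] xer[OF \<open>mn s\<close>] r1 by linarith
  qed
  have gy: "gfit pop f s y \<le> - a" if "mn s" for s using mp[OF bspec[OF reg y] ymn] that by blast
  have per: "u s * phi pop f c M y $ s \<le> - a * (u s)^2 + \<bar>u s\<bar> * (r1 * Lg * N)" if s: "mn s" for s
  proof -
    have e1: "phi pop f c M y $ s = y$s * gfit pop f s y + M * (c$s - y$s)" unfolding phi_def by (rule vec_lambda_beta)
    have e0: "xe$s * gfit pop f s xe + M * (c$s - xe$s) = 0"
      using arg_cong[OF eq, of "\<lambda>v. v $ s"] unfolding phi_def vec_lambda_beta zero_index .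
    have e: "phi pop f c M y $ s = u s * (gfit pop f s y - M) + xe$s * (gfit pop f s y - gfit pop f s xe)"
      unfolding e1 u_def using e0 by (simp add: algebra_simps)
    have A: "(u s)^2 * (gfit pop f s y - M) \<le> (u s)^2 * (- a)"
      using gy[OF s] M by (intro mult_left_mono) auto
    have D: "\<bar>gfit pop f s y - gfit pop f s xe\<bar> \<le> Lg * N" unfolding N_def by (rule Lg(1)[OF y xe])
    have "u s * (xe$s * (gfit pop f s y - gfit pop f s xe)) \<le> \<bar>u s * (xe$s * (gfit pop f s y - gfit pop f s xe))\<bar>"
      by (rule abs_ge_self)
    also have "\<dots> = \<bar>u s\<bar> * (xe$s * \<bar>gfit pop f s y - gfit pop f s xe\<bar>)"
      using Delta_nonneg[OF xe, of s] by (simp add: abs_mult)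
    also have "\<dots> \<le> \<bar>u s\<bar> * (r1 * (Lg * N))"
    proof (rule mult_left_mono)
      show "xe$s * \<bar>gfit pop f s y - gfit pop f s xe\<bar> \<le> r1 * (Lg * N)"
        by (rule mult_mono[OF xer[OF s] D r1(1)]) simp
    qed simp
    finally have B: "u s * (xe$s * (gfit pop f s y - gfit pop f s xe)) \<le> \<bar>u s\<bar> * (r1 * (Lg * N))" .
    have "u s * phi pop f c M y $ s = (u s)^2 * (gfit pop f s y - M) + u s * (xe$s * (gfit pop f s y - gfit pop f s xe))"
      unfolding e by (simp add: algebra_simps power2_eq_square)
    moreover have "(u s)^2 * (- a) = - a * (u s)^2" by simp
    moreover have "\<bar>u s\<bar> * (r1 * (Lg * N)) = \<bar>u s\<bar> * (r1 * Lg * N)" by (simp add: mult.assoc)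
    ultimately show ?thesis using A B by linarith
  qed
  have "(\<Sum>s\<in>{t. mn t}. u s * phi pop f c M y $ s) \<le> (\<Sum>s\<in>{t. mn t}. - a * (u s)^2 + \<bar>u s\<bar> * (r1 * Lg * N))"
    by (rule sum_mono) (use per in auto)
  also have "\<dots> = - a * VV + S1 * (r1 * Lg * N)"
    by (subst sum.distrib) (simp only: VV_def S1_def sum_distrib_left sum_distrib_right mult_minus_left sum_negf)
  finally have s1: "(\<Sum>s\<in>{t. mn t}. u s * phi pop f c M y $ s) \<le> - a * VV + S1 * (r1 * Lg * N)" .
  have N2: "N \<le> 2 * S1" unfolding N_def S1_def u_def by (rule norm_le_mn[OF xe y])
  have S1nn: "0 \<le> S1" unfolding S1_def by (simp add: sum_nonneg)
  have CS: "S1^2 \<le> K * VV" unfolding S1_def K_def VV_def by (rule sum_abs_sq)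
  have "S1 * (r1 * Lg * N) \<le> S1 * (r1 * Lg * (2 * S1))"
    using N2 S1nn r1 Lg(2) by (intro mult_left_mono) auto
  also have "\<dots> = 2 * r1 * Lg * S1^2" by (simp add: power2_eq_square)
  also have "\<dots> \<le> 2 * r1 * Lg * (K * VV)" using CS r1 Lg(2) by (intro mult_left_mono) auto
  also have "\<dots> = (4 * r1 * Lg * K) * VV / 2" by simp
  also have "\<dots> \<le> a * VV / 2"
  proof -
    have "0 \<le> VV" unfolding VV_def by (simp add: sum_nonneg)
    thus ?thesis using r1(3) unfolding K_def by (intro divide_right_mono mult_right_mono) auto
  qed
  finally have "(\<Sum>s\<in>{t. mn t}. u s * phi pop f c M y $ s) \<le> - a * VV / 2" using s1 by linarith
  moreover have "(\<Sum>s\<in>{t. mn t}. 2 * (y$s - xe$s) * phi pop f c M y $ s) = 2 * (\<Sum>s\<in>{t. mn t}. u s * phi pop f c M y $ s)"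
    unfolding sum_distrib_left by (intro sum.cong refl) (simp add: u_def)
  ultimately show ?thesis unfolding VV_def u_def by simp
qed


lemma stable:
  assumes a: "a > 0" and r0pos: "r0 > 0"
    and reg: "\<forall>x\<in>Delta pop. (\<forall>s. mn s \<longrightarrow> x$s \<le> r0) \<longrightarrow> (\<forall>s. mn s \<longrightarrow> gfit pop f s x \<le> - a)"
    and Lg: "\<And>s x y. x\<in>Delta pop \<Longrightarrow> y\<in>Delta pop \<Longrightarrow> \<bar>gfit pop f s x - gfit pop f s y\<bar> \<le> Lg * norm (x - y)" "Lg > 0"
    and r1: "0 \<le> r1" "r1 \<le> r0/2" "4 * r1 * Lg * real (card {t. mn t}) \<le> a"
    and xe: "xe \<in> Delta pop" and xer: "\<And>s. mn s \<Longrightarrow> xe$s \<le> r1"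
    and eq: "phi pop f c M xe = 0" and M: "0 < M"
  shows "asymp_stable (phi pop f c M) (Delta pop) xe"
proof -
  define F where "F = phi pop f c M"
  define Vf where "Vf y t = (\<Sum>s\<in>{t. mn t}. ((y t :: real^'s)$s - xe$s)^2)" for y and t :: real
  define K1 where "K1 = real (card {t. mn t}) + 1"
  have K1: "K1 > 0" unfolding K1_def by simp
  have Vnn: "0 \<le> Vf y t" for y t unfolding Vf_def by (simp add: sum_nonneg)
  have Vle: "Vf y t \<le> (norm (y t - xe))^2" for y t
  proof -
    have "Vf y t \<le> (\<Sum>s\<in>UNIV. (y t $ s - xe$s)^2)" unfolding Vf_def by (rule sum_mono2) auto
    thus ?thesis by (simp add: norm_sq_sum)
  qed
  have distV: "(norm (z - xe))^2 \<le> 4 * K1 * (\<Sum>s\<in>{t. mn t}. (z$s - xe$s)^2)" if z: "z \<in> Delta pop" for z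
  proof -
    define S1 where "S1 = (\<Sum>s\<in>{t. mn t}. \<bar>z$s - xe$s\<bar>)"
    have n: "norm (z - xe) \<le> 2 * S1" unfolding S1_def by (rule norm_le_mn[OF xe z])
    have CS: "S1^2 \<le> real (card {t. mn t}) * (\<Sum>s\<in>{t. mn t}. (z$s - xe$s)^2)" unfolding S1_def by (rule sum_abs_sq)
    have "(norm (z - xe))^2 \<le> (2 * S1)^2" using n by (intro power_mono) auto
    also have "\<dots> = 4 * S1^2" by (simp add: power2_eq_square)
    also have "\<dots> \<le> 4 * (real (card {t. mn t}) * (\<Sum>s\<in>{t. mn t}. (z$s - xe$s)^2))" using CS by simp
    also have "\<dots> \<le> 4 * K1 * (\<Sum>s\<in>{t. mn t}. (z$s - xe$s)^2)"
      unfolding K1_def by (simp add: sum_nonneg algebra_simps)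
    finally show ?thesis .
  qed
  have main: "Vf y t * exp (a * t) \<le> Vf y 0"
    if sol: "is_solution_in F (Delta pop) y" and y0: "norm (y 0 - xe) < r0/2" and t: "t \<ge> 0" for y t
  proof -
    have yD: "y t \<in> Delta pop" and yd: "(y has_vector_derivative F (y t)) (at t within {0..})" if "t \<ge> 0" for t
      using sol that by (auto simp: is_solution_in_def)
    define V' where "V' t = (\<Sum>s\<in>{t. mn t}. 2 * (y t $ s - xe$s) * F (y t) $ s)" for t
    show ?thesis
    proof (rule decay[where V="Vf y" and V'=V' and B="(r0/2)^2" and a=a])
      fix t :: real assume t: "t \<ge> 0"
      show "(Vf y has_real_derivative V' t) (at t within {0..})"
        unfolding Vf_def V'_def
      proof (rule DERIV_sum)
        fix s
        have dc: "((\<lambda>t. y t $ s) has_real_derivative (F (y t) $ s)) (at t within {0..})"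
          using bounded_linear.has_vector_derivative[OF bounded_linear_vec_nth yd[OF t], of s]
          by (simp add: has_real_derivative_iff_has_vector_derivative)
        show "((\<lambda>t. (y t $ s - xe$s)^2) has_real_derivative 2 * (y t $ s - xe$s) * F (y t) $ s) (at t within {0..})"
          using dc by (auto intro!: derivative_eq_intros)
      qed
    next
      fix t :: real assume t: "t \<ge> 0" and lt: "Vf y t < (r0/2)^2"
      show "V' t \<le> - a * Vf y t"
        unfolding V'_def Vf_def F_def
        by (rule core[OF a reg Lg r1 yD[OF t] xe xer eq M]) (use lt in \<open>unfold Vf_def\<close>)
    next
      have "(norm (y 0 - xe))^2 < (r0/2)^2" using y0 by (intro power_strict_mono) auto
      thus "Vf y 0 < (r0/2)^2" using Vle[of y 0] by linarith
    qed (use Vnn a t in auto)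
  qed
  have decayV: "Vf y t \<le> Vf y 0 * exp (a * - t)"
    if sol: "is_solution_in F (Delta pop) y" and y0: "norm (y 0 - xe) < r0/2" and t: "t \<ge> 0" for y t
  proof -
    have "Vf y t = Vf y t * exp (a * t) * exp (a * - t)" by (simp add: mult.assoc exp_add[symmetric])
    also have "\<dots> \<le> Vf y 0 * exp (a * - t)" using main[OF sol y0 t] by (intro mult_right_mono) auto
    finally show ?thesis .
  qed
  have dist_bound: "(norm (y t - xe))^2 \<le> 4 * K1 * (Vf y 0 * exp (a * - t))"
    if sol: "is_solution_in F (Delta pop) y" and y0: "norm (y 0 - xe) < r0/2" and t: "t \<ge> 0" for y t
  proof -
    have yD: "y t \<in> Delta pop" using sol t by (auto simp: is_solution_in_def)
    have "(norm (y t - xe))^2 \<le> 4 * K1 * Vf y t" using distV[OF yD] unfolding Vf_def .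
    also have "\<dots> \<le> 4 * K1 * (Vf y 0 * exp (a * - t))" using decayV[OF sol y0 t] K1 by (intro mult_left_mono) auto
    finally show ?thesis .
  qed
  have stab: "\<exists>\<delta>>0. \<forall>y. is_solution_in F (Delta pop) y \<and> dist (y 0) xe < \<delta> \<longrightarrow> (\<forall>t\<ge>0. dist (y t) xe < \<epsilon>)"
    if e: "\<epsilon> > 0" for \<epsilon>
  proof (intro exI[of _ "min (r0/2) (\<epsilon> / (2 * K1))"] conjI allI impI)
    show "min (r0/2) (\<epsilon> / (2 * K1)) > 0" using r0pos e K1 by simp
    fix y assume H: "is_solution_in F (Delta pop) y \<and> dist (y 0) xe < min (r0/2) (\<epsilon> / (2 * K1))"
    fix t :: real assume t: "0 \<le> t"
    show "dist (y t) xe < \<epsilon>"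
    proof -
      have sol: "is_solution_in F (Delta pop) y" using H by blast
      have y0: "norm (y 0 - xe) < r0/2" and y0': "norm (y 0 - xe) < \<epsilon> / (2 * K1)"
        using H by (auto simp: dist_norm)
      have "exp (a * - t) \<le> 1" using a t by (simp add: mult_nonneg_nonneg)
      hence "Vf y 0 * exp (a * - t) \<le> Vf y 0" using Vnn[of y 0] by (simp add: mult_left_le)
      also have "\<dots> \<le> (norm (y 0 - xe))^2" by (rule Vle)
      also have "\<dots> < (\<epsilon> / (2 * K1))^2" using y0' by (intro power_strict_mono) auto
      finally have v: "Vf y 0 * exp (a * - t) < (\<epsilon> / (2 * K1))^2" .
      have "(norm (y t - xe))^2 \<le> 4 * K1 * (Vf y 0 * exp (a * - t))" by (rule dist_bound[OF sol y0 t])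
      also have "\<dots> < 4 * K1 * (\<epsilon> / (2 * K1))^2" using v K1 by simp
      also have "\<dots> = \<epsilon>^2 / K1" using K1 by (simp add: field_simps power2_eq_square)
      also have "\<dots> \<le> \<epsilon>^2"
      proof -
        have "1 \<le> K1" unfolding K1_def by simp
        hence "\<epsilon>^2 * 1 \<le> \<epsilon>^2 * K1" by (intro mult_left_mono) auto
        thus ?thesis using K1 by (simp add: divide_le_eq)
      qed
      finally have "(norm (y t - xe))^2 < \<epsilon>^2" .
      hence "norm (y t - xe) < \<epsilon>" by (rule power_less_imp_less_base) (use e in simp)
      thus "dist (y t) xe < \<epsilon>" by (simp add: dist_norm)
    qed
  qed
  have attr: "\<exists>\<eta>>0. \<forall>y. is_solution_in F (Delta pop) y \<and> dist (y 0) xe < \<eta> \<longrightarrow> (y \<longlongrightarrow> xe) at_top"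
  proof (intro exI[of _ "r0/2"] conjI allI impI)
    show "r0/2 > 0" using r0pos by simp
    fix y assume H: "is_solution_in F (Delta pop) y \<and> dist (y 0) xe < r0/2"
    have sol: "is_solution_in F (Delta pop) y" using H by blast
    have y0: "norm (y 0 - xe) < r0/2" using H by (auto simp: dist_norm)
    have "LIM t at_top. a * - t :> at_bot"
      by (rule filterlim_tendsto_pos_mult_at_bot[OF tendsto_const a filterlim_uminus_at_bot_at_top])
    hence e0: "((\<lambda>t. exp (a * - t)) \<longlongrightarrow> 0) at_top"
      by (rule filterlim_compose[OF exp_at_bot])
    have g0: "((\<lambda>t. 4 * K1 * (Vf y 0 * exp (a * - t))) \<longlongrightarrow> 0) at_top"
      using tendsto_mult[OF tendsto_const[of "4 * K1 * Vf y 0"] e0] by (simp add: mult.assoc)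
    have "((\<lambda>t. (norm (y t - xe))^2) \<longlongrightarrow> 0) at_top"
    proof (rule Lim_null_comparison[OF _ g0])
      show "\<forall>\<^sub>F t in at_top. norm ((norm (y t - xe))^2) \<le> 4 * K1 * (Vf y 0 * exp (a * - t))"
        using eventually_ge_at_top[of 0] by eventually_elim (use dist_bound[OF sol y0] in simp)
    qed
    hence "((\<lambda>t. sqrt ((norm (y t - xe))^2)) \<longlongrightarrow> sqrt 0) at_top" by (rule tendsto_real_sqrt)
    hence "((\<lambda>t. norm (y t - xe)) \<longlongrightarrow> 0) at_top" by simp
    hence "((\<lambda>t. y t - xe) \<longlongrightarrow> 0) at_top" by (simp add: tendsto_norm_zero_iff)
    thus "(y \<longlongrightarrow> xe) at_top" by (rule LIM_zero_cancel)
  qed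
  show ?thesis unfolding asymp_stable_def using xe eq stab attr unfolding F_def by blast
qed


lemma reached: "reached_by_mut_eq pop f {xstar}"
  unfolding reached_by_mut_eq_def
proof
  fix c assume "c \<in> int_Delta pop"
  hence c: "c \<in> Delta pop" by (simp add: int_Delta_def)
  obtain a r0 where a: "a > 0" and r0: "r0 > 0"
    and reg: "\<forall>x\<in>Delta pop. (\<forall>s. mn s \<longrightarrow> x$s \<le> r0) \<longrightarrow> (\<forall>s. mn s \<longrightarrow> gfit pop f s x \<le> - a)"
    using region by blast
  define Ms where "Ms n = a * (r0 / real (Suc n))" for n
  have Mpos: "0 < Ms n" for n unfolding Ms_def using a r0 by simp
  have "\<exists>x\<in>Delta pop. (\<forall>s. mn s \<longrightarrow> x$s \<le> r0 / real (Suc n)) \<and> phi pop f c (Ms n) x = 0" for n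
  proof (rule exist_eq[OF a r0 reg c Mpos])
    show "r0 / real (Suc n) \<le> r0" using r0 by (simp add: divide_le_eq)
    show "Ms n \<le> a * (r0 / real (Suc n))" unfolding Ms_def by simp
  qed
  then obtain xs where xs: "\<And>n. xs n \<in> Delta pop" "\<And>n s. mn s \<Longrightarrow> xs n $ s \<le> r0 / real (Suc n)"
      "\<And>n. phi pop f c (Ms n) (xs n) = 0"
    by metis
  have lim0: "(\<lambda>n. r0 / real (Suc n)) \<longlonglongrightarrow> 0"
    using LIMSEQ_Suc[OF lim_const_over_n[of r0]] by simp
  have "Ms \<longlonglongrightarrow> 0" unfolding Ms_def using tendsto_mult[OF tendsto_const[of a] lim0] by simp
  hence mes: "mut_eq_seq pop f c xs Ms" unfolding mut_eq_seq_def using Mpos xs by blast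
  have g0: "(\<lambda>n. 2 * real CARD('s) * (r0 / real (Suc n))) \<longlonglongrightarrow> 0"
    using tendsto_mult[OF tendsto_const[of "2 * real CARD('s)"] lim0] by simp
  have "(\<lambda>n. xs n - xstar) \<longlonglongrightarrow> 0"
  proof (rule Lim_null_comparison[OF _ g0])
    show "\<forall>\<^sub>F n in sequentially. norm (xs n - xstar) \<le> 2 * real CARD('s) * (r0 / real (Suc n))"
      using norm_xstar_le[OF xs(1) xs(2)] r0 by (simp add: always_eventually)
  qed
  hence "xs \<longlonglongrightarrow> xstar" by (rule LIM_zero_cancel)
  thus "\<exists>xs Ms. mut_eq_seq pop f c xs Ms \<and> (\<exists>x\<in>{xstar}. xs \<longlonglongrightarrow> x)" using mes by blast
qed

lemma mutlim: "mutation_limit pop f {xstar}"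
proof -
  have "\<not> reached_by_mut_eq pop f {}"
    using int_Delta_ne unfolding reached_by_mut_eq_def by auto
  moreover have "Y = {}" if "Y \<subset> {xstar}" for Y using that by auto
  ultimately show ?thesis unfolding mutation_limit_def using reached xsD by auto
qed

lemma attracting: "attracting_mutation_limit pop f {xstar}"
  unfolding attracting_mutation_limit_def
proof (intro conjI mutlim ballI allI impI)
  fix c xs Ms
  assume c: "c \<in> int_Delta pop" and H: "mut_eq_seq pop f c xs Ms \<and> (\<exists>x\<in>{xstar}. xs \<longlonglongrightarrow> x)"
  have mes: "\<And>n. 0 < Ms n \<and> xs n \<in> Delta pop \<and> phi pop f c (Ms n) (xs n) = 0"
    using H by (auto simp: mut_eq_seq_def)
  have conv: "xs \<longlonglongrightarrow> xstar" using H by auto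
  obtain a r0 where a: "a > 0" and r0: "r0 > 0"
    and reg: "\<forall>x\<in>Delta pop. (\<forall>s. mn s \<longrightarrow> x$s \<le> r0) \<longrightarrow> (\<forall>s. mn s \<longrightarrow> gfit pop f s x \<le> - a)"
    using region by blast
  obtain Lg where Lg: "Lg > 0" "\<And>s x y. x\<in>Delta pop \<Longrightarrow> y\<in>Delta pop \<Longrightarrow> \<bar>gfit pop f s x - gfit pop f s y\<bar> \<le> Lg * norm (x - y)"
    using lip_g by blast
  define K where "K = real (card {t. mn t})"
  define r1 where "r1 = min (r0/2) (a / (4 * Lg * (K + 1)))"
  have K: "0 \<le> K" unfolding K_def by simp
  have r1pos: "r1 > 0" unfolding r1_def using r0 a Lg K by simp
  have r1a: "r1 \<le> r0/2" unfolding r1_def by simp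
  have r1b: "4 * r1 * Lg * K \<le> a"
  proof -
    have "r1 \<le> a / (4 * Lg * (K + 1))" unfolding r1_def by simp
    hence "r1 * (4 * Lg * (K + 1)) \<le> a" using Lg K by (simp add: le_divide_eq)
    moreover have "4 * r1 * Lg * K \<le> r1 * (4 * Lg * (K + 1))" using r1pos Lg K by (simp add: algebra_simps)
    ultimately show ?thesis by linarith
  qed
  obtain N where N: "\<And>n. n \<ge> N \<Longrightarrow> norm (xs n - xstar) < r1"
    using conv r1pos unfolding LIMSEQ_iff by blast
  define m where "m = Min (insert 1 (Ms ` {..<N}))"
  have mpos: "m > 0" unfolding m_def using mes by (subst Min_gr_iff) auto
  show "\<exists>m>0. \<forall>n. Ms n < m \<longrightarrow> asymp_stable (phi pop f c (Ms n)) (Delta pop) (xs n)"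
  proof (intro exI[of _ m] conjI allI impI mpos)
    fix n assume lt: "Ms n < m"
    have nN: "n \<ge> N"
    proof (rule ccontr)
      assume "\<not> n \<ge> N"
      hence "m \<le> Ms n" unfolding m_def by (intro Min_le) auto
      thus False using lt by simp
    qed
    have xer: "xs n $ s \<le> r1" if "mn s" for s
    proof -
      have "\<bar>(xs n - xstar) $ s\<bar> \<le> norm (xs n - xstar)" by (rule component_le_norm_cart)
      thus ?thesis using N[OF nN] xstar_mn[OF that] by simp
    qed
    show "asymp_stable (phi pop f c (Ms n)) (Delta pop) (xs n)"
      by (rule stable[OF a r0 reg Lg(2) Lg(1) less_imp_le[OF r1pos] r1a r1b[unfolded K_def]])
         (use mes xer in auto)
  qed
qed

end

theorem mainTheorem10:
  fixes pop :: "'s::finite \<Rightarrow> 'i::finite"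
    and f :: "'s \<Rightarrow> real^'s \<Rightarrow> real"
    and f' :: "'s \<Rightarrow> real^'s \<Rightarrow> ((real^'s) \<Rightarrow>\<^sub>L real)"
    and U :: "(real^'s) set"
    and xstar :: "real^'s"
  assumes "surj pop"
    and "open U" and "Delta pop \<subseteq> U"
    and "\<And>s. C1_on U (f s) (f' s)"
    and "\<And>s k x. x \<in> U \<Longrightarrow> pop k = pop s \<Longrightarrow> blinfun_apply (f' s x) (axis k 1) = 0"
    and "strict_nash pop f xstar"
  shows "attracting_mutation_limit pop f {xstar}"
proof -
  interpret nash pop f f' U xstar
    by unfold_locales (use assms in auto)
  show ?thesis by (rule attracting)
qed

end
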